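(* There exists a family $(L_n)_{n\ge2}$ of $\omega$-languages, $L_n$ over an alphabet with $n$ letters, such that for every $n\ge 2$, $L_n$ is recognized by a limit-deterministic Büchi automaton with $3n+2$ states, but $L_n$ is not recognized by any deterministic parity automaton with fewer than $n!$ states.
   Context: A limit-deterministic Büchi automaton (LDBA) is a nondeterministic Büchi automaton $(Q,q_0,\Sigma,\delta,\alpha)$ together with $Q_d\subseteq Q$ such that all accepting transitions are within $Q_d$, the transition relation is deterministic on $Q_d$, and $Q_d$ is closed under successors. A deterministic parity automaton has a deterministic transition function and a coloring of transitions by positive integers; a word is accepted iff the minimal color seen infinitely often on its run is even. *)

theory Defs
  imports Main
begin

type_synonym 'a oword = "nat \<Rightarrow> 'a"

definition words :: "'a set \<Rightarrow> 'a oword set" where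
  "words \<Sigma> = {w. \<forall>i. w i \<in> \<Sigma>}"

record ('q, 'a) nba =
  nba_states :: "'q set"
  nba_init :: 'q
  nba_alpha :: "'a set"
  nba_trans :: "('q \<times> 'a \<times> 'q) set"
  nba_acc :: "('q \<times> 'a \<times> 'q) set"

definition nba_wf :: "('q, 'a) nba \<Rightarrow> bool" where
  "nba_wf A \<longleftrightarrow> finite (nba_states A) \<and> finite (nba_alpha A) \<and>
     nba_init A \<in> nba_states A \<and>
     nba_trans A \<subseteq> nba_states A \<times> nba_alpha A \<times> nba_states A \<and>
     nba_acc A \<subseteq> nba_trans A"

definition nba_run :: "('q, 'a) nba \<Rightarrow> 'a oword \<Rightarrow> (nat \<Rightarrow> 'q) \<Rightarrow> bool" where
  "nba_run A w r \<longleftrightarrow> r 0 = nba_init A \<and>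
     (\<forall>i. (r i, w i, r (Suc i)) \<in> nba_trans A)"

definition nba_accepting_run :: "('q, 'a) nba \<Rightarrow> 'a oword \<Rightarrow> (nat \<Rightarrow> 'q) \<Rightarrow> bool" where
  "nba_accepting_run A w r \<longleftrightarrow> nba_run A w r \<and>
     (\<exists>\<^sub>\<infinity> i. (r i, w i, r (Suc i)) \<in> nba_acc A)"

definition nba_lang :: "('q, 'a) nba \<Rightarrow> 'a oword set" where
  "nba_lang A = {w \<in> words (nba_alpha A). \<exists>r. nba_accepting_run A w r}"

definition is_ldba :: "('q, 'a) nba \<Rightarrow> 'q set \<Rightarrow> bool" where
  "is_ldba A Qd \<longleftrightarrow> nba_wf A \<and> Qd \<subseteq> nba_states A \<and>
     nba_acc A \<subseteq> Qd \<times> nba_alpha A \<times> Qd \<and>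
     (\<forall>q \<in> Qd. \<forall>a q1 q2. (q, a, q1) \<in> nba_trans A \<and> (q, a, q2) \<in> nba_trans A \<longrightarrow> q1 = q2) \<and>
     (\<forall>q \<in> Qd. \<forall>a q'. (q, a, q') \<in> nba_trans A \<longrightarrow> q' \<in> Qd)"

record ('q, 'a) dpa =
  dpa_states :: "'q set"
  dpa_init :: 'q
  dpa_alpha :: "'a set"
  dpa_trans :: "'q \<Rightarrow> 'a \<Rightarrow> 'q"
  dpa_color :: "'q \<Rightarrow> 'a \<Rightarrow> nat"

definition dpa_wf :: "('q, 'a) dpa \<Rightarrow> bool" where
  "dpa_wf D \<longleftrightarrow> finite (dpa_states D) \<and> finite (dpa_alpha D) \<and>
     dpa_init D \<in> dpa_states D \<and>
     (\<forall>q \<in> dpa_states D. \<forall>a \<in> dpa_alpha D.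
        dpa_trans D q a \<in> dpa_states D \<and> dpa_color D q a \<ge> 1)"

fun dpa_run :: "('q, 'a) dpa \<Rightarrow> 'a oword \<Rightarrow> nat \<Rightarrow> 'q" where
  "dpa_run D w 0 = dpa_init D"
| "dpa_run D w (Suc i) = dpa_trans D (dpa_run D w i) (w i)"

definition dpa_colors_inf :: "('q, 'a) dpa \<Rightarrow> 'a oword \<Rightarrow> nat set" where
  "dpa_colors_inf D w = {c. \<exists>\<^sub>\<infinity> i. dpa_color D (dpa_run D w i) (w i) = c}"

definition dpa_lang :: "('q, 'a) dpa \<Rightarrow> 'a oword set" where
  "dpa_lang D = {w \<in> words (dpa_alpha D).
      dpa_colors_inf D w \<noteq> {} \<and> even (Min (dpa_colors_inf D w))}"

end

theory Submission
  imports Defs "HOL-Library.Infinite_Set" "HOL-Combinatorics.Multiset_Permutations"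
begin


definition dstar :: "('q,'a) dpa \<Rightarrow> 'q \<Rightarrow> 'a list \<Rightarrow> 'q" where
  "dstar D q u = foldl (dpa_trans D) q u"

lemma dstar_append[simp]: "dstar D q (u @ v) = dstar D (dstar D q u) v"
  by (simp add: dstar_def)

lemma dstar_Nil[simp]: "dstar D q [] = q" by (simp add: dstar_def)
lemma dstar_Cons[simp]: "dstar D q (a # u) = dstar D (dpa_trans D q a) u" by (simp add: dstar_def)

lemma dstar_in: "dpa_wf D \<Longrightarrow> q \<in> dpa_states D \<Longrightarrow> set u \<subseteq> dpa_alpha D \<Longrightarrow> dstar D q u \<in> dpa_states D"
  by (induction u arbitrary: q) (auto simp: dpa_wf_def)

lemma run_add: "dpa_run D w (i + k) = dstar D (dpa_run D w i) (map (\<lambda>j. w (i+j)) [0..<k])"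
  by (induction k) auto

definition lasso :: "'a list \<Rightarrow> 'a list \<Rightarrow> 'a oword" where
  "lasso x u i = (if i < length x then x!i else u!((i - length x) mod length u))"

lemma lasso_pre: "map (lasso x u) [0..<length x] = x"
  by (rule nth_equalityI) (auto simp: lasso_def)

lemma lasso_loop: "u \<noteq> [] \<Longrightarrow> j < length u \<Longrightarrow> lasso x u (length x + m * length u + j) = u ! j"
  by (simp add: lasso_def)

lemma lasso_ge: "length x \<le> k \<Longrightarrow> lasso x u k = u ! ((k - length x) mod length u)"
  by (simp add: lasso_def)

lemma dstar_pow: "dstar D p u = p \<Longrightarrow> dstar D p (concat (replicate m u)) = p"
  by (induction m) auto

lemma run_lasso_x: "dpa_run D (lasso x u) (length x) = dstar D (dpa_init D) x"
  using run_add[of D "lasso x u" 0 "length x"] lasso_pre[of x u] by simp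

lemma run_lasso_m:
  assumes "dstar D (dpa_init D) x = p" "dstar D p u = p" "u \<noteq> []"
  shows "dpa_run D (lasso x u) (length x + m * length u) = p"
proof (induction m)
  case 0 then show ?case using assms(1) run_lasso_x[of D x u] by simp
next
  case (Suc m)
  have "map (\<lambda>j. lasso x u (length x + m * length u + j)) [0..<length u] = u"
    by (rule nth_equalityI) (use assms(3) in \<open>auto simp: lasso_loop\<close>)
  then show ?case using run_add[of D "lasso x u" "length x + m * length u" "length u"] Suc assms
    by (simp add: ac_simps)
qed

lemma run_lasso_j:
  assumes "dstar D (dpa_init D) x = p" "dstar D p u = p" "u \<noteq> []" "j < length u"
  shows "dpa_run D (lasso x u) (length x + m * length u + j) = dstar D p (take j u)"
proof -
  have "map (\<lambda>i. lasso x u (length x + m * length u + i)) [0..<j] = take j u"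
    by (rule nth_equalityI) (use assms(3,4) in \<open>auto simp: lasso_loop\<close>)
  then show ?thesis using run_add[of D "lasso x u" "length x + m * length u" j] run_lasso_m[OF assms(1-3)]
    by simp
qed

definition loopcols :: "('q,'a) dpa \<Rightarrow> 'q \<Rightarrow> 'a list \<Rightarrow> nat set" where
  "loopcols D p u = (\<lambda>j. dpa_color D (dstar D p (take j u)) (u ! j)) ` {..<length u}"

lemma col_lasso:
  assumes "dstar D (dpa_init D) x = p" "dstar D p u = p" "u \<noteq> []" "length x \<le> k"
  shows "dpa_color D (dpa_run D (lasso x u) k) (lasso x u k)
     = dpa_color D (dstar D p (take ((k - length x) mod length u) u)) (u ! ((k - length x) mod length u))"
proof -
  define m where "m = (k - length x) div length u"
  define j where "j = (k - length x) mod length u"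
  have k: "k = length x + m * length u + j" unfolding m_def j_def using assms(4) by simp
  have j: "j < length u" unfolding j_def using assms(3) by simp
  show ?thesis unfolding j_def[symmetric] 
    apply (subst (1 2) k)
    using run_lasso_j[OF assms(1-3) j, of m] lasso_loop[OF assms(3) j, of x m] by simp
qed

lemma colors_inf_lasso:
  assumes "dstar D (dpa_init D) x = p" "dstar D p u = p" "u \<noteq> []"
  shows "dpa_colors_inf D (lasso x u) = loopcols D p u"
proof -
  define f where "f j = dpa_color D (dstar D p (take j u)) (u ! j)" for j
  have col: "\<And>k. length x \<le> k \<Longrightarrow> dpa_color D (dpa_run D (lasso x u) k) (lasso x u k) = f ((k - length x) mod length u)"
    using col_lasso[OF assms] f_def by simp
  show ?thesis
  proof (intro set_eqI iffI)
    fix c assume "c \<in> dpa_colors_inf D (lasso x u)"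
    then have "\<exists>\<^sub>\<infinity>k. dpa_color D (dpa_run D (lasso x u) k) (lasso x u k) = c"
      by (simp add: dpa_colors_inf_def)
    then obtain k where "k \<ge> length x" "dpa_color D (dpa_run D (lasso x u) k) (lasso x u k) = c"
      by (auto simp: INFM_nat_le)
    then have "f ((k - length x) mod length u) = c" using col by simp
    then show "c \<in> loopcols D p u" unfolding loopcols_def f_def using assms(3)
      by (auto intro!: image_eqI[where x="(k - length x) mod length u"])
  next
    fix c assume "c \<in> loopcols D p u"
    then obtain j where j: "j < length u" "f j = c" unfolding loopcols_def f_def by auto
    have "\<exists>\<^sub>\<infinity>k. dpa_color D (dpa_run D (lasso x u) k) (lasso x u k) = c"
      unfolding INFM_nat_le
    proof
      fix m0
      let ?k = "length x + m0 * length u + j"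
      have "?k \<ge> m0" using assms(3) by (cases u) auto
      moreover have "(?k - length x) mod length u = j" using j by simp
      ultimately show "\<exists>k\<ge>m0. dpa_color D (dpa_run D (lasso x u) k) (lasso x u k) = c"
        using col[of ?k] j by (intro exI[of _ ?k]) auto
    qed
    then show "c \<in> dpa_colors_inf D (lasso x u)" by (simp add: dpa_colors_inf_def)
  qed
qed

lemma loopcols_append:
  assumes "dstar D p u = p"
  shows "loopcols D p (u @ v) = loopcols D p u \<union> loopcols D p v"
proof (intro set_eqI iffI)
  fix c assume "c \<in> loopcols D p (u @ v)"
  then obtain j where j: "j < length u + length v" and c: "c = dpa_color D (dstar D p (take j (u @ v))) ((u @ v) ! j)"
    unfolding loopcols_def by auto
  show "c \<in> loopcols D p u \<union> loopcols D p v"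
  proof (cases "j < length u")
    case True
    then have "c = dpa_color D (dstar D p (take j u)) (u ! j)" using c by (simp add: nth_append)
    then show ?thesis unfolding loopcols_def using True by blast
  next
    case False
    define j' where "j' = j - length u"
    have jj: "j = length u + j'" "j' < length v" using False j unfolding j'_def by auto
    have "c = dpa_color D (dstar D p (take j' v)) (v ! j')" using c assms unfolding jj(1)
      by (simp add: nth_append)
    then show ?thesis unfolding loopcols_def using jj(2) by blast
  qed
next
  fix c assume "c \<in> loopcols D p u \<union> loopcols D p v"
  then show "c \<in> loopcols D p (u @ v)"
  proof
    assume "c \<in> loopcols D p u"
    then obtain j where j: "j < length u" and c: "c = dpa_color D (dstar D p (take j u)) (u ! j)"
      unfolding loopcols_def by auto
    then have "c = dpa_color D (dstar D p (take j (u @ v))) ((u @ v) ! j)" by (simp add: nth_append)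
    then show ?thesis unfolding loopcols_def using j by (auto intro!: image_eqI[of _ _ j])
  next
    assume "c \<in> loopcols D p v"
    then obtain j where j: "j < length v" and c: "c = dpa_color D (dstar D p (take j v)) (v ! j)"
      unfolding loopcols_def by auto
    then have "c = dpa_color D (dstar D p (take (length u + j) (u @ v))) ((u @ v) ! (length u + j))"
      using assms by (simp add: nth_append)
    then show ?thesis unfolding loopcols_def using j by (auto intro!: image_eqI[of _ _ "length u + j"])
  qed
qed

lemma loopcols_fin: fixes D :: "('q,'a) dpa" shows "finite (loopcols D p u)" "u \<noteq> [] \<Longrightarrow> loopcols D p u \<noteq> {}"
  unfolding loopcols_def by auto

lemma lasso_words: "set x \<subseteq> A \<Longrightarrow> set u \<subseteq> A \<Longrightarrow> u \<noteq> [] \<Longrightarrow> lasso x u \<in> words A"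
  unfolding words_def lasso_def by auto

lemma lasso_dpa_lang:
  assumes "dstar D (dpa_init D) x = p" "dstar D p u = p" "u \<noteq> []" "lasso x u \<in> words (dpa_alpha D)"
  shows "lasso x u \<in> dpa_lang D \<longleftrightarrow> even (Min (loopcols D p u))"
  using assms colors_inf_lasso[OF assms(1-3)] loopcols_fin[where D=D and p=p and u=u] by (simp add: dpa_lang_def)



definition Lang :: "nat \<Rightarrow> nat oword set" where
  "Lang n = {w \<in> words {0..<n}. \<exists>i. (\<exists>\<^sub>\<infinity>k. w k = i) \<and> \<not> (\<exists>\<^sub>\<infinity>k. w k = i \<and> w (Suc k) = i)}"

definition noaa :: "'a \<Rightarrow> 'a list \<Rightarrow> bool" where
  "noaa a u \<longleftrightarrow> (\<forall>j. Suc j < length u \<longrightarrow> \<not> (u ! j = a \<and> u ! Suc j = a))"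

definition good :: "'a \<Rightarrow> 'a list \<Rightarrow> bool" where
  "good a u \<longleftrightarrow> u \<noteq> [] \<and> a \<in> set u \<and> last u \<noteq> a \<and> noaa a u"

definition infx :: "'a list \<Rightarrow> 'a list \<Rightarrow> bool" where
  "infx w u \<longleftrightarrow> (\<exists>y z. u = y @ w @ z)"

lemma infx_appL: "infx w u \<Longrightarrow> infx w (u @ v)" unfolding infx_def by fastforce
lemma infx_appR: "infx w v \<Longrightarrow> infx w (u @ v)" unfolding infx_def
  by (metis append.assoc)

lemma noaa_notin: "a \<notin> set u \<Longrightarrow> noaa a u"
  unfolding noaa_def by (metis Suc_lessD nth_mem)

lemma noaa_Cons: "a \<notin> set u \<Longrightarrow> noaa a (a # u)"
  unfolding noaa_def by (auto simp: nth_Cons split: nat.splits)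

lemma noaa_append:
  assumes "noaa a u" "noaa a v" "u = [] \<or> last u \<noteq> a"
  shows "noaa a (u @ v)"
  unfolding noaa_def
proof (intro allI impI notI)
  fix j assume j: "Suc j < length (u @ v)" and e: "(u @ v) ! j = a \<and> (u @ v) ! Suc j = a"
  consider "Suc j < length u" | "Suc j = length u" | "length u \<le> j" by linarith
  then show False
  proof cases
    case 1
    then have "u ! j = a" "u ! Suc j = a" using e by (simp_all add: nth_append)
    then show ?thesis using assms(1) 1 unfolding noaa_def by blast
  next
    case 2
    then have ne: "u \<noteq> []" and jj: "j = length u - 1" by auto
    have "u ! j = last u" using ne jj by (simp add: last_conv_nth)
    moreover have "u ! j = a" using e 2 by (simp add: nth_append)
    ultimately show ?thesis using assms(3) ne by simp
  next
    case 3
    define k where "k = j - length u"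
    have jk: "j = length u + k" using 3 unfolding k_def by simp
    have "v ! k = a" "v ! Suc k = a" using e unfolding jk by (simp_all add: nth_append)
    moreover have "Suc k < length v" using j unfolding jk by simp
    ultimately show ?thesis using assms(2) unfolding noaa_def by blast
  qed
qed

lemma good_append: "good a u \<Longrightarrow> good a v \<Longrightarrow> good a (u @ v)"
  unfolding good_def using noaa_append by fastforce

lemma good_append_notin: "good a u \<Longrightarrow> a \<notin> set v \<Longrightarrow> good a (u @ v)"
  unfolding good_def using noaa_append[of a u v] noaa_notin[of a v]
  by (auto simp: last_append)

lemma good_pow: "good a u \<Longrightarrow> m \<ge> 1 \<Longrightarrow> good a (concat (replicate m u))"
proof (induction m)
  case (Suc m)
  show ?case
  proof (cases "m = 0")
    case True
    then have "concat (replicate (Suc m) u) = u" by simp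
    then show ?thesis using Suc.prems(1) by (simp only:)
  next
    case False
    then have g: "good a (concat (replicate m u))" using Suc.IH Suc.prems(1) by simp
    have "concat (replicate (Suc m) u) = u @ concat (replicate m u)" by simp
    then show ?thesis using good_append[OF Suc.prems(1) g] by (simp only:)
  qed
qed simp

lemma le_mult_len: "u \<noteq> [] \<Longrightarrow> m0 \<le> (m0::nat) * length u"
  by (cases "length u") auto

lemma lasso_inf_letter:
  assumes "u \<noteq> []"
  shows "(\<exists>\<^sub>\<infinity>k. lasso x u k = i) \<longleftrightarrow> i \<in> set u"
proof
  assume "\<exists>\<^sub>\<infinity>k. lasso x u k = i"
  then obtain k where k: "k \<ge> length x" "lasso x u k = i" by (auto simp: INFM_nat_le)
  have lt: "(k - length x) mod length u < length u" using assms by simp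
  have "u ! ((k - length x) mod length u) = i" using k lasso_ge[OF k(1)] by simp
  then show "i \<in> set u" using nth_mem[OF lt] by simp
next
  assume "i \<in> set u"
  then obtain j where j: "j < length u" "u ! j = i" by (auto simp: in_set_conv_nth)
  show "\<exists>\<^sub>\<infinity>k. lasso x u k = i" unfolding INFM_nat_le
  proof
    fix m0
    have "m0 \<le> length x + m0 * length u + j" using le_mult_len[OF assms, of m0] by linarith
    moreover have "lasso x u (length x + m0 * length u + j) = i" using lasso_loop[OF assms j(1), of x m0] j(2) by simp
    ultimately show "\<exists>k\<ge>m0. lasso x u k = i" by blast
  qed
qed

lemma lasso_aa_inf:
  assumes "u \<noteq> []" "infx [i,i] u"
  shows "\<exists>\<^sub>\<infinity>k. lasso x u k = i \<and> lasso x u (Suc k) = i"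
proof -
  obtain y z where u: "u = y @ [i,i] @ z" using assms(2) unfolding infx_def by auto
  have j1: "length y < length u" "Suc (length y) < length u" using u by auto
  show ?thesis unfolding INFM_nat_le
  proof
    fix m0
    have "lasso x u (length x + m0 * length u + length y) = i"
      using lasso_loop[OF assms(1) j1(1)] u by (simp add: nth_append)
    moreover have "lasso x u (length x + m0 * length u + Suc (length y)) = i"
      using lasso_loop[OF assms(1) j1(2)] u by (simp add: nth_append)
    moreover have "length x + m0 * length u + length y \<ge> m0" using le_mult_len[OF assms(1), of m0] by linarith
    ultimately show "\<exists>k\<ge>m0. lasso x u k = i \<and> lasso x u (Suc k) = i"
      by (intro exI[of _ "length x + m0 * length u + length y"]) auto
  qed
qed

lemma lasso_good:
  assumes "good i u"
  shows "\<not> (\<exists>\<^sub>\<infinity>k. lasso x u k = i \<and> lasso x u (Suc k) = i)"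
proof -
  have ne: "u \<noteq> []" and nl: "last u \<noteq> i" and na: "noaa i u" using assms unfolding good_def by auto
  have "\<forall>k\<ge>length x. \<not> (lasso x u k = i \<and> lasso x u (Suc k) = i)"
  proof (intro allI impI notI)
    fix k assume k: "length x \<le> k" and e: "lasso x u k = i \<and> lasso x u (Suc k) = i"
    define j where "j = (k - length x) mod length u"
    have j: "j < length u" using ne unfolding j_def by simp
    have a1: "u ! j = i" using e k lasso_ge[OF k] j_def by simp
    have "Suc k - length x = Suc (k - length x)" using k by simp
    then have a2: "u ! ((Suc j) mod length u) = i" using e k lasso_ge[of x "Suc k" u] j_def
      by (simp add: mod_Suc_eq)
    show False
    proof (cases "Suc j < length u")
      case True then show ?thesis using a1 a2 na unfolding noaa_def by auto
    next
      case False then have "Suc j = length u" using j by simp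
      then have "length u - 1 = j" by simp
      then have "u ! j = last u" using ne by (simp add: last_conv_nth)
      then show ?thesis using a1 nl by simp
    qed
  qed
  then show ?thesis unfolding INFM_nat_le by (meson le_trans nat_le_linear)
qed



lemma fp_add: "(t^^(m+n)) q = (t^^m) ((t^^n) q)"
  by (simp add: funpow_add)

lemma idem_exists:
  assumes fin: "finite S" and cl: "\<And>q. q \<in> S \<Longrightarrow> t q \<in> S"
  shows "\<exists>M\<ge>1. \<forall>q\<in>S. (t^^M) ((t^^M) q) = (t^^M) q"
proof -
  have clk: "\<And>k q. q \<in> S \<Longrightarrow> (t^^k) q \<in> S"
  proof -
    fix k q assume "q \<in> S" then show "(t^^k) q \<in> S" by (induction k) (auto intro: cl)
  qed
  define g where "g k = restrict (t^^k) S" for k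
  have "range g \<subseteq> S \<rightarrow>\<^sub>E S"
  proof
    fix f assume "f \<in> range g"
    then obtain k where k: "f = g k" by blast
    show "f \<in> S \<rightarrow>\<^sub>E S" unfolding k g_def restrict_PiE_iff using clk by blast
  qed
  moreover have "finite (S \<rightarrow>\<^sub>E S)" by (rule finite_PiE[OF fin fin])
  ultimately have fr: "finite (range g)" by (rule finite_subset)
  have "\<not> inj g"
  proof
    assume "inj g"
    then have "finite (UNIV :: nat set)" using finite_imageD[OF fr] by blast
    then show False by simp
  qed
  then obtain a0 b0 where ab0: "a0 \<noteq> b0" "g a0 = g b0" unfolding inj_def by blast
  define a where "a = min a0 b0"
  define b where "b = max a0 b0"
  have ab: "a < b" "g a = g b" using ab0 unfolding a_def b_def by (auto simp: min_def max_def)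
  have eq: "\<And>q. q \<in> S \<Longrightarrow> (t^^a) q = (t^^b) q"
  proof -
    fix q assume q: "q \<in> S"
    have "g a q = g b q" using ab(2) by simp
    then show "(t^^a) q = (t^^b) q" using q unfolding g_def by simp
  qed
  define d where "d = b - a"
  have d: "d \<ge> 1" "b = a + d" using ab(1) unfolding d_def by auto
  have per: "\<And>m k q. q \<in> S \<Longrightarrow> k \<ge> a \<Longrightarrow> (t^^(k + m * d)) q = (t^^k) q"
  proof -
    fix m k q assume q: "q \<in> S" and k: "k \<ge> a"
    show "(t^^(k + m * d)) q = (t^^k) q"
    proof (induction m)
      case 0 then show ?case by simp
    next
      case (Suc m)
      have e1: "k + Suc m * d = (k - a + m * d) + (a + d)" using k by simp
      have e2: "k + m * d = (k - a + m * d) + a" using k by simp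
      have "(t^^(k + Suc m * d)) q = (t^^(k - a + m * d)) ((t^^(a + d)) q)"
        unfolding e1 by (rule fp_add)
      also have "\<dots> = (t^^(k - a + m * d)) ((t^^a) q)" using eq[OF q] d(2) by simp
      also have "\<dots> = (t^^(k + m * d)) q" unfolding e2 by (rule fp_add[symmetric])
      finally show ?case using Suc by simp
    qed
  qed
  define M where "M = d * (a + 1)"
  have da: "1 * a \<le> d * a" by (rule mult_le_mono1[OF d(1)])
  have da': "a \<le> d * a" using da by simp
  have md: "M = d * a + d" unfolding M_def by simp
  have M: "M \<ge> 1" "M \<ge> a" using md d(1) da' by linarith+
  have "\<forall>q\<in>S. (t^^M) ((t^^M) q) = (t^^M) q"
  proof
    fix q assume q: "q \<in> S"
    have mm: "M + M = M + (a+1) * d" unfolding M_def by simp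
    have "(t^^M) ((t^^M) q) = (t^^(M + M)) q" by (rule fp_add[symmetric])
    also have "\<dots> = (t^^(M + (a+1) * d)) q" unfolding mm by (rule refl)
    also have "\<dots> = (t^^M) q" by (rule per[OF q M(2)])
    finally show "(t^^M) ((t^^M) q) = (t^^M) q" .
  qed
  then show ?thesis using M(1) by (intro exI[of _ M] conjI)
qed

lemma dstar_rep: "dstar D q (concat (replicate m F)) = ((\<lambda>q. dstar D q F)^^m) q"
  by (induction m arbitrary: q) (auto simp: funpow_Suc_right simp del: funpow.simps)

definition Mexp :: "('q,'a) dpa \<Rightarrow> 'a list \<Rightarrow> nat" where
  "Mexp D F = (SOME M. M \<ge> 1 \<and> (\<forall>q\<in>dpa_states D.
      dstar D (dstar D q (concat (replicate M F))) (concat (replicate M F)) = dstar D q (concat (replicate M F))))"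

definition pw :: "('q,'a) dpa \<Rightarrow> 'a list \<Rightarrow> 'a list" where
  "pw D F = concat (replicate (Mexp D F) F)"

lemma pw_props:
  assumes "dpa_wf D" "set F \<subseteq> dpa_alpha D"
  shows "Mexp D F \<ge> 1" "\<And>q. q \<in> dpa_states D \<Longrightarrow> dstar D (dstar D q (pw D F)) (pw D F) = dstar D q (pw D F)"
proof -
  let ?t = "\<lambda>q. dstar D q F"
  have "finite (dpa_states D)" using assms(1) by (simp add: dpa_wf_def)
  moreover have "\<And>q. q \<in> dpa_states D \<Longrightarrow> ?t q \<in> dpa_states D" by (rule dstar_in[OF assms(1) _ assms(2)])
  ultimately obtain M where "M \<ge> 1" "\<forall>q\<in>dpa_states D. (?t^^M) ((?t^^M) q) = (?t^^M) q"
    using idem_exists[of "dpa_states D" ?t] by blast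
  define P where "P M = (M \<ge> 1 \<and> (\<forall>q\<in>dpa_states D.
      dstar D (dstar D q (concat (replicate M F))) (concat (replicate M F)) = dstar D q (concat (replicate M F))))" for M
  have ex: "\<exists>M. P M" unfolding P_def using \<open>M \<ge> 1\<close> \<open>\<forall>q\<in>dpa_states D. (?t^^M) ((?t^^M) q) = (?t^^M) q\<close>
    by (intro exI[of _ M]) (simp add: dstar_rep)
  have me: "Mexp D F = (SOME M. P M)" unfolding Mexp_def P_def by (rule refl)
  have "P (Mexp D F)" unfolding me by (rule someI_ex[OF ex])
  then have P1: "Mexp D F \<ge> 1" unfolding P_def by (rule conjunct1)
  from \<open>P (Mexp D F)\<close> have P2: "\<forall>q\<in>dpa_states D. dstar D (dstar D q (pw D F)) (pw D F) = dstar D q (pw D F)"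
    unfolding P_def pw_def by (rule conjunct2)
  show "Mexp D F \<ge> 1" by (rule P1)
  show "\<And>q. q \<in> dpa_states D \<Longrightarrow> dstar D (dstar D q (pw D F)) (pw D F) = dstar D q (pw D F)"
    using P2 by (rule bspec)
qed

lemma set_rep: "set (concat (replicate m F)) \<subseteq> set F" by (induction m) auto

lemma set_pw: "set (pw D F) \<subseteq> set F" unfolding pw_def by (rule set_rep)

lemma pw_suffix:
  assumes "Mexp D F \<ge> 1" shows "\<exists>y. pw D F = y @ F"
proof -
  obtain k where k: "Mexp D F = Suc k" using assms by (cases "Mexp D F") auto
  have "pw D F = concat (replicate k F @ [F])" unfolding pw_def k
    by (simp only: replicate_append_same replicate_Suc)
  then show ?thesis by auto
qed

definition X :: "nat \<Rightarrow> nat list \<Rightarrow> nat list" where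
  "X a rest = a # concat (map (\<lambda>c. [c,c]) rest)"

fun Gw :: "('q,nat) dpa \<Rightarrow> nat list \<Rightarrow> nat list" where
  "Gw D (a # b # r) = pw D (X a (b # r) @ Gw D (b # r))"
| "Gw D _ = []"

lemma set_X: "set (X a rest) = insert a (set rest)" unfolding X_def by auto

lemma set_G: "set (Gw D s) \<subseteq> set s"
proof (induction D s rule: Gw.induct)
  case (1 D a b r)
  have "set (pw D (X a (b # r) @ Gw D (b # r))) \<subseteq> set (X a (b # r) @ Gw D (b # r))" by (rule set_pw)
  also have "\<dots> \<subseteq> set (a # b # r)" using 1 set_X[of a "b # r"] by auto
  finally show ?case by simp
qed auto

lemma G_props:
  assumes "dpa_wf D" "set (a # b # r) \<subseteq> dpa_alpha D"
  shows "Mexp D (X a (b # r) @ Gw D (b # r)) \<ge> 1"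
    "\<And>q. q \<in> dpa_states D \<Longrightarrow> dstar D (dstar D q (Gw D (a#b#r))) (Gw D (a#b#r)) = dstar D q (Gw D (a#b#r))"
proof -
  have "set (X a (b # r) @ Gw D (b # r)) \<subseteq> dpa_alpha D"
    using assms(2) set_G[of D "b#r"] set_X[of a "b#r"] by auto
  note pp = pw_props[OF assms(1) this]
  show "Mexp D (X a (b # r) @ Gw D (b # r)) \<ge> 1" by (rule pp(1))
  show "\<And>q. q \<in> dpa_states D \<Longrightarrow> dstar D (dstar D q (Gw D (a#b#r))) (Gw D (a#b#r)) = dstar D q (Gw D (a#b#r))"
    unfolding Gw.simps(1) by (rule pp(2))
qed

lemma good_X: "distinct (a # b # r) \<Longrightarrow> good a (X a (b # r))"
proof -
  assume d: "distinct (a # b # r)"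
  define v where "v = concat (map (\<lambda>c. [c,c]) (b # r))"
  have sv: "set v = set (b # r)" unfolding v_def by auto
  have nv: "v \<noteq> []" unfolding v_def by simp
  have an: "a \<notin> set v" using d sv by simp
  have "last (a # v) \<noteq> a" using nv an last_in_set[OF nv] by auto
  then show "good a (X a (b # r))" unfolding good_def X_def v_def[symmetric]
    using noaa_Cons[OF an] by simp
qed

lemma G_good:
  assumes "dpa_wf D" "set (a # b # r) \<subseteq> dpa_alpha D" "distinct (a # b # r)"
  shows "good a (Gw D (a # b # r))"
proof -
  have "a \<notin> set (b # r)" using assms(3) by simp
  then have "a \<notin> set (Gw D (b # r))" using set_G[of D "b#r"] by blast
  then have g: "good a (X a (b # r) @ Gw D (b # r))"
    by (rule good_append_notin[OF good_X[OF assms(3)]])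
  have "Gw D (a # b # r) = concat (replicate (Mexp D (X a (b # r) @ Gw D (b # r))) (X a (b # r) @ Gw D (b # r)))"
    unfolding Gw.simps pw_def by (rule refl)
  then show ?thesis using good_pow[OF g G_props(1)[OF assms(1,2)]] by (simp only:)
qed

lemma infx_X: "c \<in> set rest \<Longrightarrow> infx [c,c] (X a rest)"
proof -
  assume "c \<in> set rest"
  then obtain r1 r2 where "rest = r1 @ c # r2" by (auto simp: in_set_conv_decomp)
  then show ?thesis unfolding X_def infx_def
    by (intro exI[of _ "a # concat (map (\<lambda>c. [c,c]) r1)"] exI[of _ "concat (map (\<lambda>c. [c,c]) r2)"]) simp
qed

lemma G_infx:
  assumes "dpa_wf D" "set (a # b # r) \<subseteq> dpa_alpha D" "c \<in> set (b # r)"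
  shows "infx [c,c] (Gw D (a # b # r))"
proof -
  obtain y where "Gw D (a # b # r) = y @ (X a (b # r) @ Gw D (b # r))"
    using pw_suffix[OF G_props(1)[OF assms(1,2)]] by auto
  then show ?thesis using infx_X[OF assms(3)] infx_appL infx_appR by metis
qed

lemma G_suffix1:
  assumes "dpa_wf D" "set (a # s) \<subseteq> dpa_alpha D"
  shows "\<exists>y. Gw D (a # s) = y @ Gw D s"
proof (cases s)
  case Nil then show ?thesis by simp
next
  case (Cons b r)
  have "set (a # b # r) \<subseteq> dpa_alpha D" using assms(2) Cons by simp
  from pw_suffix[OF G_props(1)[OF assms(1) this]]
  obtain y where "Gw D (a # b # r) = y @ (X a (b # r) @ Gw D (b # r))" by auto
  then have "Gw D (a # b # r) = (y @ X a (b # r)) @ Gw D (b # r)" by simp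
  then show ?thesis unfolding Cons by (rule exI)
qed

lemma G_suffix:
  assumes "dpa_wf D" "set (ys @ s) \<subseteq> dpa_alpha D"
  shows "\<exists>y. Gw D (ys @ s) = y @ Gw D s"
  using assms(2)
proof (induction ys)
  case Nil then show ?case by simp
next
  case (Cons a ys)
  have p1: "set (ys @ s) \<subseteq> dpa_alpha D" and p2: "set (a # ys @ s) \<subseteq> dpa_alpha D" using Cons.prems by auto
  obtain y where y: "Gw D (ys @ s) = y @ Gw D s" using Cons.IH[OF p1] by blast
  obtain y' where y': "Gw D (a # ys @ s) = y' @ Gw D (ys @ s)"
    using G_suffix1[OF assms(1) p2] by blast
  have "Gw D ((a # ys) @ s) = (y' @ y) @ Gw D s"
    unfolding append_Cons y' y append_assoc by (rule refl)
  then show ?case by (rule exI)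
qed



lemma first_diff:
  "length xs = length ys \<Longrightarrow> xs \<noteq> ys \<Longrightarrow> \<exists>c a b t t'. xs = c @ a # t \<and> ys = c @ b # t' \<and> a \<noteq> b"
proof (induction xs arbitrary: ys)
  case Nil then show ?case by simp
next
  case (Cons x xs)
  obtain y ys' where ys: "ys = y # ys'" using Cons.prems(1) by (cases ys) auto
  show ?case
  proof (cases "x = y")
    case False
    then show ?thesis unfolding ys by (intro exI[of _ "[]"] exI[of _ x] exI[of _ y] exI[of _ xs] exI[of _ ys']) simp
  next
    case True
    then have "xs \<noteq> ys'" "length xs = length ys'" using Cons.prems ys by auto
    then obtain c a b t t' where "xs = c @ a # t" "ys' = c @ b # t'" "a \<noteq> b"
      using Cons.IH by blast
    then show ?thesis unfolding ys True by (intro exI[of _ "y # c"] exI[of _ a] exI[of _ b] exI[of _ t] exI[of _ t']) simp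
  qed
qed

context
  fixes D :: "('q, nat) dpa" and n :: nat
  assumes wf: "dpa_wf D" and alpha: "dpa_alpha D = {0..<n}" and lang: "dpa_lang D = Lang n"
begin

definition st :: "nat list \<Rightarrow> 'q" where
  "st \<pi> = dstar D (dpa_init D) (Gw D \<pi>)"

lemma st_in: "set \<pi> \<subseteq> {0..<n} \<Longrightarrow> st \<pi> \<in> dpa_states D"
  unfolding st_def
proof (rule dstar_in[OF wf])
  show "dpa_init D \<in> dpa_states D" using wf by (simp add: dpa_wf_def)
  assume "set \<pi> \<subseteq> {0..<n}"
  then show "set (Gw D \<pi>) \<subseteq> dpa_alpha D" using set_G[of D \<pi>] alpha by blast
qed

lemma loop_at:
  assumes "set (ys @ s) \<subseteq> {0..<n}" "s = a # b # r"
  shows "dstar D (st (ys @ s)) (Gw D s) = st (ys @ s)"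
proof -
  have al: "set (ys @ s) \<subseteq> dpa_alpha D" using assms(1) alpha by simp
  obtain y where y: "Gw D (ys @ s) = y @ Gw D s" using G_suffix[OF wf al] by blast
  have "set y \<subseteq> set (Gw D (ys @ s))" unfolding y by simp
  then have "set y \<subseteq> dpa_alpha D" using set_G[of D "ys @ s"] al by blast
  then have q: "dstar D (dpa_init D) y \<in> dpa_states D"
    using dstar_in[OF wf] wf by (simp add: dpa_wf_def)
  have st: "st (ys @ s) = dstar D (dstar D (dpa_init D) y) (Gw D (a # b # r))" unfolding st_def y by (simp only: assms(2) dstar_append)
  have "set (a # b # r) \<subseteq> dpa_alpha D" using al assms(2) by auto
  from G_props(2)[OF wf this q] show ?thesis unfolding st unfolding assms(2) .
qed

lemma lasso_in_lang:
  assumes "set x \<subseteq> {0..<n}" "set u \<subseteq> {0..<n}" "u \<noteq> []"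
  shows "lasso x u \<in> words (dpa_alpha D)"
  using lasso_words[OF assms] alpha by simp

lemma even_at:
  assumes "set (ys @ s) \<subseteq> {0..<n}" "s = a # b # r" "distinct s"
  shows "even (Min (loopcols D (st (ys @ s)) (Gw D s)))"
proof -
  have al: "set (a # b # r) \<subseteq> dpa_alpha D" using assms alpha by auto
  have g: "good a (Gw D s)" using G_good[OF wf al] assms(2,3) by simp
  then have ne: "Gw D s \<noteq> []" and ain: "a \<in> set (Gw D s)" unfolding good_def by auto
  have s1: "set (Gw D (ys @ s)) \<subseteq> {0..<n}" using set_G[of D "ys @ s"] assms(1) by blast
  have s2: "set (Gw D s) \<subseteq> {0..<n}" using set_G[of D s] assms(1) by auto
  have w: "lasso (Gw D (ys @ s)) (Gw D s) \<in> words (dpa_alpha D)" by (rule lasso_in_lang[OF s1 s2 ne])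
  have "lasso (Gw D (ys @ s)) (Gw D s) \<in> Lang n"
    unfolding Lang_def
  proof (intro CollectI conjI exI)
    show "lasso (Gw D (ys @ s)) (Gw D s) \<in> words {0..<n}" using w alpha by simp
    show "\<exists>\<^sub>\<infinity>k. lasso (Gw D (ys @ s)) (Gw D s) k = a" using lasso_inf_letter[OF ne] ain by blast
    show "\<not> (\<exists>\<^sub>\<infinity>k. lasso (Gw D (ys @ s)) (Gw D s) k = a \<and> lasso (Gw D (ys @ s)) (Gw D s) (Suc k) = a)"
      by (rule lasso_good[OF g])
  qed
  then have "lasso (Gw D (ys @ s)) (Gw D s) \<in> dpa_lang D" using lang by simp
  then show ?thesis
    using lasso_dpa_lang[OF st_def[symmetric] loop_at[OF assms(1,2)] ne w] by simp
qed

lemma st_inj: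
  assumes p1: "\<pi> \<in> permutations_of_set {0..<n}" and p2: "\<sigma> \<in> permutations_of_set {0..<n}"
    and eq: "st \<pi> = st \<sigma>"
  shows "\<pi> = \<sigma>"
proof (rule ccontr)
  assume ne: "\<pi> \<noteq> \<sigma>"
  have sp: "set \<pi> = {0..<n}" "distinct \<pi>" "set \<sigma> = {0..<n}" "distinct \<sigma>"
    using p1 p2 unfolding permutations_of_set_def by auto
  have "length \<pi> = length \<sigma>" using sp distinct_card by metis
  then obtain c a b t t' where pi: "\<pi> = c @ a # t" and si: "\<sigma> = c @ b # t'" and ab: "a \<noteq> b"
    using first_diff ne by blast
  have sa: "set (a # t) = {0..<n} - set c" using sp(1,2) unfolding pi by auto
  have sb: "set (b # t') = {0..<n} - set c" using sp(3,4) unfolding si by auto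
  have st_eq: "set (a # t) = set (b # t')" using sa sb by simp
  have "b \<in> set t" using st_eq ab by (metis list.set_intros(1) set_ConsD)
  then obtain b0 r where t: "t = b0 # r" by (cases t) auto
  have "a \<in> set t'" using st_eq ab by (metis list.set_intros(1) set_ConsD)
  then obtain b1 r' where t': "t' = b1 # r'" by (cases t') auto
  define s where "s = a # t"
  define s' where "s' = b # t'"
  have ds: "distinct s" using sp(2) unfolding pi s_def by simp
  have ds': "distinct s'" using sp(4) unfolding si s'_def by simp
  have ss: "set (c @ s) \<subseteq> {0..<n}" using sp(1) unfolding pi s_def by simp
  have ss': "set (c @ s') \<subseteq> {0..<n}" using sp(3) unfolding si s'_def by simp
  define p where "p = st \<pi>"
  have pp: "p = st (c @ s)" "p = st (c @ s')" unfolding p_def using eq pi si s_def s'_def by simp_all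
  have l1: "dstar D p (Gw D s) = p" using loop_at[OF ss] pp(1) unfolding s_def t by simp
  have l2: "dstar D p (Gw D s') = p" using loop_at[OF ss'] pp(2) unfolding s'_def t' by simp
  have e1: "even (Min (loopcols D p (Gw D s)))" using even_at[OF ss _ ds] pp(1) unfolding s_def t by simp
  have e2: "even (Min (loopcols D p (Gw D s')))" using even_at[OF ss' _ ds'] pp(2) unfolding s'_def t' by simp
  have al: "set (a # b0 # r) \<subseteq> dpa_alpha D" using ss alpha unfolding s_def t by auto
  have al': "set (b # b1 # r') \<subseteq> dpa_alpha D" using ss' alpha unfolding s'_def t' by auto
  have g: "good a (Gw D s)" using G_good[OF wf al] ds unfolding s_def t by simp
  then have ne1: "Gw D s \<noteq> []" unfolding good_def by simp
  have g': "good b (Gw D s')" using G_good[OF wf al'] ds' unfolding s'_def t' by simp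
  then have ne2: "Gw D s' \<noteq> []" unfolding good_def by simp
  define W where "W = Gw D s @ Gw D s'"
  have neW: "W \<noteq> []" unfolding W_def using ne1 by simp
  have lW: "dstar D p W = p" unfolding W_def using l1 l2 by simp
  have cW: "loopcols D p W = loopcols D p (Gw D s) \<union> loopcols D p (Gw D s')"
    unfolding W_def by (rule loopcols_append[OF l1])
  have "Min (loopcols D p W) = min (Min (loopcols D p (Gw D s))) (Min (loopcols D p (Gw D s')))"
    unfolding cW by (rule Min_Un) (simp_all add: loopcols_fin ne1 ne2)
  then have eW: "even (Min (loopcols D p W))" using e1 e2 by (simp add: min_def)
  have sW: "set W \<subseteq> set s" unfolding W_def using set_G[of D s] set_G[of D s'] st_eq
    unfolding s_def s'_def by auto
  have s1: "set (Gw D \<pi>) \<subseteq> {0..<n}" using set_G[of D \<pi>] sp(1) by blast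
  have s2: "set W \<subseteq> {0..<n}" using sW ss by auto
  have w: "lasso (Gw D \<pi>) W \<in> words (dpa_alpha D)" by (rule lasso_in_lang[OF s1 s2 neW])
  have "dstar D (dpa_init D) (Gw D \<pi>) = p" unfolding p_def st_def by (rule refl)
  from lasso_dpa_lang[OF this lW neW w] eW
  have "lasso (Gw D \<pi>) W \<in> dpa_lang D" by simp
  then have "lasso (Gw D \<pi>) W \<in> Lang n" using lang by simp
  then obtain i where i1: "\<exists>\<^sub>\<infinity>k. lasso (Gw D \<pi>) W k = i"
    and i2: "\<not> (\<exists>\<^sub>\<infinity>k. lasso (Gw D \<pi>) W k = i \<and> lasso (Gw D \<pi>) W (Suc k) = i)"
    unfolding Lang_def by blast
  have "i \<in> set W" using i1 lasso_inf_letter[OF neW] by blast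
  then have "i \<in> set s" using sW by blast
  have "infx [i,i] W"
  proof (cases "i = a")
    case True
    then have "i \<in> set (b1 # r')" using \<open>a \<in> set t'\<close> t' by simp
    then have "infx [i,i] (Gw D s')" using G_infx[OF wf al'] unfolding s'_def t' by blast
    then show ?thesis unfolding W_def by (rule infx_appR)
  next
    case False
    then have "i \<in> set (b0 # r)" using \<open>i \<in> set s\<close> t unfolding s_def by simp
    then have "infx [i,i] (Gw D s)" using G_infx[OF wf al] unfolding s_def t by blast
    then show ?thesis unfolding W_def by (rule infx_appL)
  qed
  then show False using lasso_aa_inf[OF neW] i2 by blast
qed

lemma lower_bound: "n \<ge> 2 \<Longrightarrow> fact n \<le> card (dpa_states D)"
proof -
  let ?P = "permutations_of_set {0..<n}"
  have "inj_on st ?P" using st_inj by (auto intro: inj_onI)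
  then have "card (st ` ?P) = fact n" using card_image by fastforce
  moreover have "st ` ?P \<subseteq> dpa_states D"
    using st_in unfolding permutations_of_set_def by auto
  moreover have "finite (dpa_states D)" using wf by (simp add: dpa_wf_def)
  ultimately show ?thesis by (metis card_mono)
qed

end



definition ltrans :: "nat \<Rightarrow> (nat \<times> nat \<times> nat) set" where
  "ltrans n = {(0,c,0) | c. c < n} \<union> {(0,c,Suc i) | c i. c < n \<and> i < n}
    \<union> {(Suc i, c, Suc i) | c i. c < n \<and> i < n \<and> c \<noteq> i}
    \<union> {(Suc i, i, Suc (n+i)) | i. i < n}
    \<union> {(Suc (n+i), c, Suc i) | c i. c < n \<and> i < n \<and> c \<noteq> i}"

definition lacc :: "nat \<Rightarrow> (nat \<times> nat \<times> nat) set" where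
  "lacc n = {(Suc i, i, Suc (n+i)) | i. i < n}"

definition ldba :: "nat \<Rightarrow> (nat, nat) nba" where
  "ldba n = (| nba_states = {0..<3*n+2}, nba_init = 0, nba_alpha = {0..<n},
              nba_trans = ltrans n, nba_acc = lacc n |)"

lemma trans_A:
  assumes "(Suc i, c, q) \<in> ltrans n" "i < n"
  shows "(c \<noteq> i \<and> q = Suc i) \<or> (c = i \<and> q = Suc (n+i))"
  using assms unfolding ltrans_def by auto

lemma trans_B:
  assumes "(Suc (n+i), c, q) \<in> ltrans n" "i < n"
  shows "c \<noteq> i \<and> q = Suc i"
  using assms unfolding ltrans_def by auto

lemma ldba_is: "is_ldba (ldba n) {1..2*n}"
  unfolding is_ldba_def nba_wf_def ldba_def
  by (auto simp: ltrans_def lacc_def)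

lemma card_ldba: "card (nba_states (ldba n)) = 3 * n + 2"
  unfolding ldba_def by simp

lemma lang_sub:
  assumes "w \<in> nba_lang (ldba n)"
  shows "w \<in> Lang n"
proof -
  have w: "w \<in> words {0..<n}" using assms unfolding nba_lang_def ldba_def by simp
  obtain r where r0: "r 0 = 0" and rt: "\<And>k. (r k, w k, r (Suc k)) \<in> ltrans n"
    and ra: "\<exists>\<^sub>\<infinity>k. (r k, w k, r (Suc k)) \<in> lacc n"
    using assms unfolding nba_lang_def ldba_def nba_accepting_run_def nba_run_def by auto
  obtain k0 where "(r k0, w k0, r (Suc k0)) \<in> lacc n" using ra by (auto simp: INFM_nat_le)
  then obtain i where i: "i < n" "r k0 = Suc i" "w k0 = i" unfolding lacc_def by auto
  have comp: "r k = Suc i \<or> r k = Suc (n+i)" if "k \<ge> k0" for k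
    using that
  proof (induction k rule: dec_induct)
    case base then show ?case using i by simp
  next
    case (step k)
    from \<open>r k = Suc i \<or> r k = Suc (n+i)\<close> show ?case
    proof
      assume "r k = Suc i"
      then show ?thesis using trans_A[OF _ i(1)] rt[of k] by metis
    next
      assume "r k = Suc (n+i)"
      then show ?thesis using trans_B[OF _ i(1)] rt[of k] by metis
    qed
  qed
  have inf: "\<exists>\<^sub>\<infinity>k. w k = i" unfolding INFM_nat_le
  proof
    fix m
    obtain k where k: "k \<ge> max m k0" "(r k, w k, r (Suc k)) \<in> lacc n"
      using ra unfolding INFM_nat_le by blast
    then obtain j where j: "j < n" "r k = Suc j" "w k = j" unfolding lacc_def by auto
    have "r k = Suc i \<or> r k = Suc (n+i)" using comp k(1) by simp
    then have "j = i" using j i(1) by auto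
    then show "\<exists>k\<ge>m. w k = i" using k(1) j(3) by (intro exI[of _ k]) simp
  qed
  have fin: "\<forall>k\<ge>k0. \<not> (w k = i \<and> w (Suc k) = i)"
  proof (intro allI impI notI)
    fix k assume k: "k \<ge> k0" and e: "w k = i \<and> w (Suc k) = i"
    show False
    proof (cases "r k = Suc i")
      case True
      then have "r (Suc k) = Suc (n+i)" using trans_A[OF _ i(1)] rt[of k] e by metis
      then show False using trans_B[OF _ i(1)] rt[of "Suc k"] e by metis
    next
      case False
      then have "r k = Suc (n+i)" using comp k by blast
      then show False using trans_B[OF _ i(1)] rt[of k] e by metis
    qed
  qed
  have "\<not> (\<exists>\<^sub>\<infinity>k. w k = i \<and> w (Suc k) = i)"
    unfolding INFM_nat_le using fin by (meson le_trans nat_le_linear)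
  then show ?thesis unfolding Lang_def using w inf by blast
qed

lemma lang_sup:
  assumes "w \<in> Lang n"
  shows "w \<in> nba_lang (ldba n)"
proof -
  obtain i where w: "w \<in> words {0..<n}" and inf: "\<exists>\<^sub>\<infinity>k. w k = i"
    and nfin: "\<not> (\<exists>\<^sub>\<infinity>k. w k = i \<and> w (Suc k) = i)"
    using assms unfolding Lang_def by blast
  have wn: "\<And>k. w k < n" using w unfolding words_def by auto
  obtain k0 where k0: "\<And>k. k \<ge> k0 \<Longrightarrow> \<not> (w k = i \<and> w (Suc k) = i)"
    using nfin unfolding INFM_nat_le by blast
  obtain k1 where "w k1 = i" using inf by (auto simp: INFM_nat_le)
  then have i: "i < n" using wn by metis
  define r where "r k = (if k \<le> k0 then 0 else if k > Suc k0 \<and> w (k - 1) = i then Suc (n+i) else Suc i)" for k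
  have rt: "(r k, w k, r (Suc k)) \<in> ltrans n" for k
  proof -
    consider "k < k0" | "k = k0" | "k > k0" by linarith
    then show ?thesis
    proof cases
      case 1 then show ?thesis unfolding r_def ltrans_def using wn[of k] by auto
    next
      case 2 then show ?thesis unfolding r_def ltrans_def using wn[of k] i by auto
    next
      case 3
      show ?thesis
      proof (cases "k > Suc k0 \<and> w (k - 1) = i")
        case True
        then have "w k \<noteq> i" using k0[of "k - 1"] by (metis Suc_pred' Suc_lessD less_Suc_eq_le less_imp_le_nat gr0I not_less0 3)
        then show ?thesis unfolding r_def ltrans_def using True 3 wn[of k] i by auto
      next
        case False
        then show ?thesis unfolding r_def ltrans_def using False 3 wn[of k] i by auto
      qed
    qed
  qed
  have acc: "\<exists>\<^sub>\<infinity>k. (r k, w k, r (Suc k)) \<in> lacc n"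
    unfolding INFM_nat_le
  proof
    fix m
    obtain k where k: "k \<ge> max m (k0 + 2)" "w k = i" using inf unfolding INFM_nat_le by blast
    have kk: "k - 1 \<ge> k0" "Suc (k - 1) = k" using k by auto
    have "w (k - 1) \<noteq> i" using k0[OF kk(1)] k(2) unfolding kk(2) by blast
    then have "r k = Suc i" "r (Suc k) = Suc (n+i)" unfolding r_def using k by auto
    then show "\<exists>k'\<ge>m. (r k', w k', r (Suc k')) \<in> lacc n"
      using k i unfolding lacc_def by (intro exI[of _ k]) auto
  qed
  show ?thesis unfolding nba_lang_def ldba_def nba_accepting_run_def nba_run_def
    using w rt acc by (auto intro!: exI[of _ r] simp: r_def)
qed

lemma ldba_lang: "nba_lang (ldba n) = Lang n"
  using lang_sub lang_sup by blast


theorem mainTheorem5: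
  shows "\<exists>L :: nat \<Rightarrow> nat oword set. \<forall>n \<ge> 2.
     L n \<subseteq> words {0..<n} \<and>
     (\<exists>(A :: (nat, nat) nba) Qd. is_ldba A Qd \<and> nba_alpha A = {0..<n} \<and>
         card (nba_states A) = 3 * n + 2 \<and> nba_lang A = L n) \<and>
     (\<forall>D :: (nat, nat) dpa. dpa_wf D \<and> dpa_alpha D = {0..<n} \<and> dpa_lang D = L n
         \<longrightarrow> card (dpa_states D) \<ge> fact n)"
proof (intro exI[of _ Lang] allI impI conjI)
  fix n :: nat assume n: "n \<ge> 2"
  show "Lang n \<subseteq> words {0..<n}" unfolding Lang_def by blast
  show "\<exists>(A :: (nat, nat) nba) Qd. is_ldba A Qd \<and> nba_alpha A = {0..<n} \<and>
         card (nba_states A) = 3 * n + 2 \<and> nba_lang A = Lang n"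
    using ldba_is[of n] card_ldba[of n] ldba_lang[of n]
    by (intro exI[of _ "ldba n"] exI[of _ "{1..2*n}"]) (simp add: ldba_def)
  fix D :: "(nat, nat) dpa"
  assume h: "dpa_wf D \<and> dpa_alpha D = {0..<n} \<and> dpa_lang D = Lang n"
  then show "card (dpa_states D) \<ge> fact n"
    using lower_bound[of D n] n by blast
qed

end
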